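(* For every integer $\ell\geq 1$ there is a first-order prenex sentence $\varphi_\ell$ over $\tau_{\mathsf{ord}}$ that is true in $L_\ell$ and false in $L_m$ for every $m\geq 1$ with $m\neq \ell$, such that $\varphi_\ell$ has at most $q^*(\ell)+2$ quantifiers and its quantifier prefix strictly alternates between $\exists$ and $\forall$ and ends with $\forall$.
   Context: Vocabulary $\tau_{\mathsf{ord}} = \langle < ;\ \mathsf{min}, \mathsf{max}\rangle$ with $<$ binary and $\mathsf{min},\mathsf{max}$ constants. For $\ell \geq 1$, $L_\ell$ is the linear order with $\ell+1$ elements (its length is $\ell$), with $\mathsf{min},\mathsf{max}$ interpreted as first and last elements. Define $q^*_\forall, q^*_\exists : \mathbb{Z}_{\geq 1}\to\mathbb{N}$ by $q^*_\forall(1)=1$, $q^*_\exists(1)=2$, $q^*_\forall(2)=2$, and $q^*_\exists(2\ell) = q^*_\forall(\ell)+1$ ($\ell\geq 1$); $q^*_\exists(2\ell+1) = q^*_\forall(\ell+1)+1$ ($\ell \geq 1$); $q^*_\forall(2\ell) = q^*_\exists(\ell)+1$ ($\ell\geq 2$); $q^*_\forall(2\ell+1) = q^*_\exists(\ell)+1$ ($\ell\geq 1$). Let $q^*(\ell) = \min(q^*_\exists(\ell), q^*_\forall(\ell))$. *)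

theory Defs
  imports Main
begin

datatype trm = Var nat | Cmin | Cmax

datatype qf = Less "trm" "trm" | Eq "trm" "trm" | TT | FF
  | Neg qf | Conj qf qf | Disj qf qf

datatype quant = QEx | QAll

text \<open>A prenex formula: a quantifier prefix and a quantifier-free matrix.
  Variable i of the matrix is bound by the i-th quantifier of the prefix.\<close>
type_synonym prenex = "quant list \<times> qf"

fun term_vars :: "trm \<Rightarrow> nat set" where
  "term_vars (Var i) = {i}"
| "term_vars Cmin = {}"
| "term_vars Cmax = {}"

fun qf_vars :: "qf \<Rightarrow> nat set" where
  "qf_vars (Less s t) = term_vars s \<union> term_vars t"
| "qf_vars (Eq s t) = term_vars s \<union> term_vars t"
| "qf_vars TT = {}"
| "qf_vars FF = {}"
| "qf_vars (Neg p) = qf_vars p"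
| "qf_vars (Conj p q) = qf_vars p \<union> qf_vars q"
| "qf_vars (Disj p q) = qf_vars p \<union> qf_vars q"

definition is_sentence :: "prenex \<Rightarrow> bool" where
  "is_sentence \<phi> = (\<forall>i\<in>qf_vars (snd \<phi>). i < length (fst \<phi>))"

text \<open>The linear order L_l has universe {0..l}, < is the usual order,
  min = 0 and max = l.\<close>
fun term_val :: "nat \<Rightarrow> nat list \<Rightarrow> trm \<Rightarrow> nat" where
  "term_val l vs (Var i) = vs ! i"
| "term_val l vs Cmin = 0"
| "term_val l vs Cmax = l"

fun qf_sat :: "nat \<Rightarrow> nat list \<Rightarrow> qf \<Rightarrow> bool" where
  "qf_sat l vs (Less s t) = (term_val l vs s < term_val l vs t)"
| "qf_sat l vs (Eq s t) = (term_val l vs s = term_val l vs t)"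
| "qf_sat l vs TT = True"
| "qf_sat l vs FF = False"
| "qf_sat l vs (Neg p) = (\<not> qf_sat l vs p)"
| "qf_sat l vs (Conj p q) = (qf_sat l vs p \<and> qf_sat l vs q)"
| "qf_sat l vs (Disj p q) = (qf_sat l vs p \<or> qf_sat l vs q)"

fun prefix_sat :: "nat \<Rightarrow> quant list \<Rightarrow> qf \<Rightarrow> nat list \<Rightarrow> bool" where
  "prefix_sat l [] \<psi> vs = qf_sat l vs \<psi>"
| "prefix_sat l (QEx # qs) \<psi> vs = (\<exists>a\<in>{0..l}. prefix_sat l qs \<psi> (vs @ [a]))"
| "prefix_sat l (QAll # qs) \<psi> vs = (\<forall>a\<in>{0..l}. prefix_sat l qs \<psi> (vs @ [a]))"

definition holds_in_L :: "nat \<Rightarrow> prenex \<Rightarrow> bool" where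
  "holds_in_L l \<phi> = prefix_sat l (fst \<phi>) (snd \<phi>) []"

definition alternating_ends_forall :: "quant list \<Rightarrow> bool" where
  "alternating_ends_forall qs =
     (qs \<noteq> [] \<and> last qs = QAll \<and> (\<forall>i. Suc i < length qs \<longrightarrow> qs ! i \<noteq> qs ! Suc i))"

section \<open>The functions q*_forall, q*_exists (values at 0 are irrelevant)\<close>

fun qstarA :: "nat \<Rightarrow> nat" and qstarE :: "nat \<Rightarrow> nat" where
  "qstarE n = (if n \<le> 1 then 2
               else if even n then qstarA (n div 2) + 1
               else qstarA (n div 2 + 1) + 1)"
| "qstarA n = (if n \<le> 1 then 1
               else if n = 2 then 2
               else qstarE (n div 2) + 1)"

definition qstar :: "nat \<Rightarrow> nat" where
  "qstar l = min (qstarE l) (qstarA l)"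

end

theory Submission
  imports Defs
begin


fun flipq :: "quant \<Rightarrow> quant" where
  "flipq QEx = QAll" | "flipq QAll = QEx"

lemma flipq_flipq[simp]: "flipq (flipq q) = q" by (cases q) auto
lemma flipq_neq[simp]: "flipq q \<noteq> q" "q \<noteq> flipq q" by (cases q, auto)+

fun alt :: "quant \<Rightarrow> nat \<Rightarrow> quant list" where
  "alt q 0 = []"
| "alt q (Suc v) = q # alt (flipq q) v"

lemma length_alt[simp]: "length (alt q v) = v" by (induction v arbitrary: q) auto

lemma alt_nth: "i < v \<Longrightarrow> alt q v ! i = (if even i then q else flipq q)"
proof (induction v arbitrary: q i)
  case 0 then show ?case by simp
next
  case (Suc v) then show ?case by (cases i) auto
qed

lemma map_flipq_alt: "map flipq (alt q v) = alt (flipq q) v"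
  by (induction v arbitrary: q) auto

lemma alt_alternating:
  assumes "v \<ge> 1" and "(q = QAll \<and> odd v) \<or> (q = QEx \<and> even v)"
  shows "alternating_ends_forall (alt q v)"
proof -
  have ne: "alt q v \<noteq> []" using assms(1) by (cases v) auto
  have "last (alt q v) = alt q v ! (v - 1)" using ne by (simp add: last_conv_nth)
  also have "\<dots> = QAll" using assms by (auto simp: alt_nth)
  finally show ?thesis unfolding alternating_ends_forall_def using ne
    by (auto simp: alt_nth)
qed

definition tok :: "nat \<Rightarrow> trm \<Rightarrow> bool" where
  "tok j t = (\<forall>i\<in>term_vars t. i < j)"

lemma term_val_app[simp]: "tok (length vs) t \<Longrightarrow> term_val l (vs @ ws) t = term_val l vs t"
  by (cases t) (auto simp: tok_def nth_append)

lemma term_val_last[simp]: "term_val l (vs @ [a]) (Var (length vs)) = a" by simp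

lemma tok_mono: "tok j t \<Longrightarrow> j \<le> k \<Longrightarrow> tok k t" by (auto simp: tok_def)
lemma tok_Var[simp]: "tok k (Var j) = (j < k)" by (simp add: tok_def)
lemma tok_consts[simp]: "tok k Cmin" "tok k Cmax" by (simp_all add: tok_def)

lemma term_val_le: "\<forall>x\<in>set vs. x \<le> l \<Longrightarrow> tok (length vs) t \<Longrightarrow> term_val l vs t \<le> l"
  by (cases t) (auto simp: tok_def)

lemma qf_sat_app: "\<forall>i\<in>qf_vars p. i < length vs \<Longrightarrow> qf_sat l (vs @ ws) p = qf_sat l vs p"
proof (induction p)
  case (Less s t)
  then have "tok (length vs) s" "tok (length vs) t" by (auto simp: tok_def)
  then show ?case by simp
next
  case (Eq s t)
  then have "tok (length vs) s" "tok (length vs) t" by (auto simp: tok_def)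
  then show ?case by simp
qed auto

lemma prefix_sat_qf: "\<forall>i\<in>qf_vars p. i < length vs \<Longrightarrow> prefix_sat l qs p vs = qf_sat l vs p"
proof (induction qs arbitrary: vs)
  case Nil then show ?case by simp
next
  case (Cons q qs)
  have "\<And>a. prefix_sat l qs p (vs @ [a]) = qf_sat l vs p"
  proof -
    fix a
    have "\<forall>i\<in>qf_vars p. i < length (vs @ [a])" using Cons.prems by auto
    then show "prefix_sat l qs p (vs @ [a]) = qf_sat l vs p"
      using Cons.IH qf_sat_app[OF Cons.prems] by simp
  qed
  then show ?case by (cases q) auto
qed

definition ite :: "qf \<Rightarrow> qf \<Rightarrow> qf \<Rightarrow> qf" where
  "ite C A B = Disj (Conj C A) (Conj (Neg C) B)"

lemma qf_vars_ite[simp]: "qf_vars (ite C A B) = qf_vars C \<union> qf_vars A \<union> qf_vars B"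
  by (auto simp: ite_def)

lemma prefix_sat_ite: "\<forall>i\<in>qf_vars C. i < length vs \<Longrightarrow>
  prefix_sat l qs (ite C A B) vs = (if qf_sat l vs C then prefix_sat l qs A vs else prefix_sat l qs B vs)"
proof (induction qs arbitrary: vs)
  case Nil then show ?case by (simp add: ite_def)
next
  case (Cons q qs)
  have "\<And>a. prefix_sat l qs (ite C A B) (vs @ [a]) = (if qf_sat l vs C then prefix_sat l qs A (vs @ [a]) else prefix_sat l qs B (vs @ [a]))"
  proof -
    fix a
    have "\<forall>i\<in>qf_vars C. i < length (vs @ [a])" using Cons.prems by auto
    then show "?thesis a"
      using Cons.IH qf_sat_app[OF Cons.prems] by simp
  qed
  then show ?case by (cases q) auto
qed

lemma prefix_sat_neg: "prefix_sat l (map flipq qs) (Neg p) vs = (\<not> prefix_sat l qs p vs)"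
proof (induction qs arbitrary: vs)
  case (Cons q qs) then show ?case by (cases q) auto
qed simp



definition PE :: "nat \<Rightarrow> nat \<Rightarrow> nat \<Rightarrow> nat \<Rightarrow> bool" where
  "PE g s t a = (if g \<le> 1 then s < t else s < a \<and> a < t \<and> s + (g+1) div 2 \<le> a \<and> a + g div 2 \<le> t)"

definition QA :: "nat \<Rightarrow> nat \<Rightarrow> nat \<Rightarrow> nat \<Rightarrow> bool" where
  "QA g s t b = (if g \<le> 1 then s < t else if s < b \<and> b \<le> t
      then (s + (g+2) div 2 \<le> b \<or> b + (g + 1 - (g+2) div 2) \<le> t) else s < t)"

definition RA :: "nat \<Rightarrow> nat \<Rightarrow> nat \<Rightarrow> nat \<Rightarrow> bool" where
  "RA n s t z = (if z = t then s + n \<le> t else if s < z \<and> z < t then \<not> (s + n \<le> z) else True)"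

lemma M1: assumes "t \<le> l" "1 \<le> g" shows "(\<exists>a\<in>{0..l}. PE g s t a) = (s + g \<le> t)"
proof
  assume "\<exists>a\<in>{0..l}. PE g s t a"
  then obtain a where "PE g s t a" by auto
  then show "s + g \<le> t" using assms by (auto simp: PE_def split: if_splits)
next
  assume h0: "s + g \<le> t"
  note h = h0 assms
  show "\<exists>a\<in>{0..l}. PE g s t a"
  proof (cases "g \<le> 1")
    case True then show ?thesis using h by (auto simp: PE_def)
  next
    case False
    then have "PE g s t (s + (g+1) div 2)" using h by (auto simp: PE_def)
    moreover have "s + (g+1) div 2 \<le> l" using h False by linarith
    ultimately show ?thesis by auto
  qed
qed

lemma M2: assumes h: "s \<le> l" "t \<le> l" "1 \<le> g" shows "(\<forall>b\<in>{0..l}. QA g s t b) = (s + g \<le> t)"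
proof
  assume A: "\<forall>b\<in>{0..l}. QA g s t b"
  show "s + g \<le> t"
  proof (cases "g \<le> 1")
    case True then show ?thesis using A h by (auto simp: QA_def)
  next
    case False
    have st: "s < t" using A[rule_format, of s] h False by (auto simp: QA_def)
    show ?thesis
    proof (rule ccontr)
      assume c: "\<not> s + g \<le> t"
      define b where "b = min (s + (g+2) div 2 - 1) t"
      have "b \<in> {0..l}" using h by (auto simp: b_def)
      then have "QA g s t b" using A by auto
      moreover have "s < b" "b \<le> t" using st False by (auto simp: b_def)
      ultimately show False using c False st by (auto simp: QA_def b_def)
    qed
  qed
next
  assume "s + g \<le> t"
  then show "\<forall>b\<in>{0..l}. QA g s t b" using h by (auto simp: QA_def)
qed

lemma QA_out: "\<not> (s < b \<and> b \<le> t) \<Longrightarrow> QA g s t b = (s < t)"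
  by (auto simp: QA_def)

lemma split_forall:
  assumes "\<forall>b\<in>S. \<not> b \<le> a \<longrightarrow> P b" "\<forall>b\<in>S. b \<le> a \<longrightarrow> Q b"
  shows "(\<forall>b\<in>S. if b \<le> a then P b else Q b) = ((\<forall>b\<in>S. P b) \<and> (\<forall>b\<in>S. Q b))"
  using assms by auto

lemma M3:
  assumes "s < a" "a < t" "t \<le> l" "1 \<le> g1" "1 \<le> g2"
  shows "(\<forall>b\<in>{0..l}. if b \<le> a then QA g1 s a b else QA g2 a t b) = (s + g1 \<le> a \<and> a + g2 \<le> t)"
proof -
  have "(\<forall>b\<in>{0..l}. if b \<le> a then QA g1 s a b else QA g2 a t b)
     = ((\<forall>b\<in>{0..l}. QA g1 s a b) \<and> (\<forall>b\<in>{0..l}. QA g2 a t b))"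
  proof (rule split_forall)
    show "\<forall>b\<in>{0..l}. \<not> b \<le> a \<longrightarrow> QA g1 s a b" using assms QA_out[of s _ a g1] by auto
    show "\<forall>b\<in>{0..l}. b \<le> a \<longrightarrow> QA g2 a t b" using assms QA_out[of a _ t g2] by auto
  qed
  also have "\<dots> = (s + g1 \<le> a \<and> a + g2 \<le> t)" using assms by (simp add: M2)
  finally show ?thesis .
qed

lemma PE_imp: "PE g s t a \<Longrightarrow> 1 \<le> g \<Longrightarrow> s + g \<le> t"
  by (auto simp: PE_def split: if_splits)

lemma M4:
  assumes "b \<le> t" "t \<le> l" "1 \<le> k1" "1 \<le> k2"
  shows "(\<exists>a\<in>{0..l}. if a \<le> b then PE k1 s b a else PE k2 b t a) = (s + k1 \<le> b \<or> b + k2 \<le> t)"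
proof
  assume "\<exists>a\<in>{0..l}. if a \<le> b then PE k1 s b a else PE k2 b t a"
  then show "s + k1 \<le> b \<or> b + k2 \<le> t" using assms by (auto split: if_splits dest: PE_imp)
next
  assume "s + k1 \<le> b \<or> b + k2 \<le> t"
  then show "\<exists>a\<in>{0..l}. if a \<le> b then PE k1 s b a else PE k2 b t a"
  proof
    assume h: "s + k1 \<le> b"
    show ?thesis
    proof (cases "k1 \<le> 1")
      case True
      then have "PE k1 s b 0" using h assms by (auto simp: PE_def)
      then show ?thesis by (intro bexI[of _ 0]) auto
    next
      case False
      then have "PE k1 s b (s + (k1+1) div 2)" using h by (auto simp: PE_def)
      moreover have "s + (k1+1) div 2 \<le> b" using h False by linarith
      ultimately show ?thesis using assms by (intro bexI[of _ "s + (k1+1) div 2"]) auto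
    qed
  next
    assume h: "b + k2 \<le> t"
    show ?thesis
    proof (cases "k2 \<le> 1")
      case True
      then have "PE k2 b t t" using h assms by (auto simp: PE_def)
      moreover have "\<not> t \<le> b" using h assms by auto
      ultimately show ?thesis using assms by (intro bexI[of _ t]) auto
    next
      case False
      then have "PE k2 b t (b + (k2+1) div 2)" using h by (auto simp: PE_def)
      moreover have "b < b + (k2+1) div 2" "b + (k2+1) div 2 \<le> l" using h False assms by linarith+
      ultimately show ?thesis by (intro bexI[of _ "b + (k2+1) div 2"]) auto
    qed
  qed
qed

lemma M6: assumes h: "t \<le> l" "1 \<le> n" shows "(\<forall>z\<in>{0..l}. RA n s t z) = (s + n = t)"
proof
  assume A: "\<forall>z\<in>{0..l}. RA n s t z"
  have ge: "s + n \<le> t" using A[rule_format, of t] h by (auto simp: RA_def)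
  show "s + n = t"
  proof (rule ccontr)
    assume "s + n \<noteq> t"
    then have "s + n < t" using ge by auto
    then have "RA n s t (t - 1)" using A h by auto
    moreover have "t - 1 \<noteq> t" "s < t - 1" "t - 1 < t" "s + n \<le> t - 1" using \<open>s + n < t\<close> h by auto
    ultimately show False unfolding RA_def by auto
  qed
next
  assume "s + n = t"
  then show "\<forall>z\<in>{0..l}. RA n s t z" using h by (auto simp: RA_def)
qed

lemma M7:
  assumes "a < t" "t \<le> l" "1 \<le> n1" "1 \<le> n2"
  shows "(\<forall>b\<in>{0..l}. if b \<le> a then RA n1 s a b else RA n2 a t b) = (s + n1 = a \<and> a + n2 = t)"
proof -
  have "(\<forall>b\<in>{0..l}. if b \<le> a then RA n1 s a b else RA n2 a t b)
     = ((\<forall>b\<in>{0..l}. RA n1 s a b) \<and> (\<forall>b\<in>{0..l}. RA n2 a t b))"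
  proof (rule split_forall)
    show "\<forall>b\<in>{0..l}. \<not> b \<le> a \<longrightarrow> RA n1 s a b" unfolding RA_def by auto
    show "\<forall>b\<in>{0..l}. b \<le> a \<longrightarrow> RA n2 a t b" using assms unfolding RA_def by auto
  qed
  also have "\<dots> = (s + n1 = a \<and> a + n2 = t)" using assms by (simp add: M6)
  finally show ?thesis .
qed



definition Leq :: "trm \<Rightarrow> trm \<Rightarrow> qf" where "Leq x y = Disj (Less x y) (Eq x y)"

lemma qf_vars_Leq[simp]: "qf_vars (Leq x y) = term_vars x \<union> term_vars y" by (simp add: Leq_def)
lemma qf_sat_Leq[simp]: "qf_sat l vs (Leq x y) = (term_val l vs x \<le> term_val l vs y)"
  by (auto simp: Leq_def)

fun OKE :: "nat \<Rightarrow> nat \<Rightarrow> bool" and OKA :: "nat \<Rightarrow> nat \<Rightarrow> bool" where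
  "OKE 0 g = (g \<le> 1)"
| "OKE (Suc v) g = (g \<le> 1 \<or> (OKA v ((g+1) div 2) \<and> OKA v (g div 2)))"
| "OKA 0 g = (g \<le> 1)"
| "OKA (Suc v) g = (g \<le> 1 \<or> (OKE v ((g+2) div 2) \<and> OKE v (g + 1 - (g+2) div 2)))"

fun GeE :: "nat \<Rightarrow> nat \<Rightarrow> nat \<Rightarrow> trm \<Rightarrow> trm \<Rightarrow> qf" and GeA :: "nat \<Rightarrow> nat \<Rightarrow> nat \<Rightarrow> trm \<Rightarrow> trm \<Rightarrow> qf" where
  "GeE 0 g j s t = Less s t"
| "GeE (Suc v) g j s t = (if g \<le> 1 then Less s t else
     ite (Conj (Less s (Var j)) (Less (Var j) t))
       (if v = 0 then Conj (GeA v ((g+1) div 2) (Suc j) s (Var j)) (GeA v (g div 2) (Suc j) (Var j) t)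
        else ite (Leq (Var (Suc j)) (Var j)) (GeA v ((g+1) div 2) (Suc j) s (Var j)) (GeA v (g div 2) (Suc j) (Var j) t))
       FF)"
| "GeA 0 g j s t = Less s t"
| "GeA (Suc v) g j s t = (if g \<le> 1 then Less s t else
     ite (Conj (Less s (Var j)) (Leq (Var j) t))
       (if v = 0 then Disj (GeE v ((g+2) div 2) (Suc j) s (Var j)) (GeE v (g + 1 - (g+2) div 2) (Suc j) (Var j) t)
        else ite (Leq (Var (Suc j)) (Var j)) (GeE v ((g+2) div 2) (Suc j) s (Var j)) (GeE v (g + 1 - (g+2) div 2) (Suc j) (Var j) t))
       (Less s t))"

lemma vars_Ge: "qf_vars (GeE v g j s t) \<subseteq> {..<j+v} \<union> term_vars s \<union> term_vars t
   \<and> qf_vars (GeA v g j s t) \<subseteq> {..<j+v} \<union> term_vars s \<union> term_vars t"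
proof (induction v arbitrary: g j s t)
  case 0 then show ?case by auto
next
  case (Suc v)
  note IH = Suc.IH
  show ?case
  proof (cases "g \<le> 1")
    case True then show ?thesis by auto
  next
    case False
    have a: "x < j + Suc v \<or> x \<in> term_vars s \<or> x \<in> term_vars t"
      if "x \<in> qf_vars (GeA v g' (Suc j) s' t')" "s' = s \<or> s' = Var j" "t' = t \<or> t' = Var j" for g' s' t' x
      using IH[of g' "Suc j" s' t'] that by auto
    have b: "x < j + Suc v \<or> x \<in> term_vars s \<or> x \<in> term_vars t"
      if "x \<in> qf_vars (GeE v g' (Suc j) s' t')" "s' = s \<or> s' = Var j" "t' = t \<or> t' = Var j" for g' s' t' x
      using IH[of g' "Suc j" s' t'] that by auto
    show ?thesis using False
      by (auto split: if_splits dest: a b)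
  qed
qed



lemma prefix_sat_alt_Suc_E: "prefix_sat l (alt QEx (Suc v)) p vs = (\<exists>a\<in>{0..l}. prefix_sat l (alt QAll v) p (vs @ [a]))"
  by simp
lemma prefix_sat_alt_Suc_A: "prefix_sat l (alt QAll (Suc v)) p vs = (\<forall>a\<in>{0..l}. prefix_sat l (alt QEx v) p (vs @ [a]))"
  by simp

lemma wf_app: "\<forall>x\<in>set vs. x \<le> l \<Longrightarrow> a \<in> {0..l} \<Longrightarrow> \<forall>x\<in>set (vs @ [a]). x \<le> l" by auto

lemma tok_app: "tok (length vs) s \<Longrightarrow> tok (length (vs @ [a])) s" by (auto simp: tok_def)

lemma main:
  fixes l :: nat
  shows "\<forall>g vs s t. (\<forall>x\<in>set vs. x \<le> l) \<longrightarrow> tok (length vs) s \<longrightarrow> tok (length vs) t \<longrightarrow> 1 \<le> g \<longrightarrow>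
    (OKE v g \<longrightarrow> (prefix_sat l (alt QEx v) (GeE v g (length vs) s t) vs = (term_val l vs s + g \<le> term_val l vs t))
       \<and> (0 < v \<longrightarrow> (\<forall>a\<in>{0..l}. prefix_sat l (alt QAll (v-1)) (GeE v g (length vs) s t) (vs@[a]) = PE g (term_val l vs s) (term_val l vs t) a)))
  \<and> (OKA v g \<longrightarrow> (prefix_sat l (alt QAll v) (GeA v g (length vs) s t) vs = (term_val l vs s + g \<le> term_val l vs t))
       \<and> (0 < v \<longrightarrow> (\<forall>b\<in>{0..l}. prefix_sat l (alt QEx (v-1)) (GeA v g (length vs) s t) (vs@[b]) = QA g (term_val l vs s) (term_val l vs t) b)))"
proof (induction v)
  case 0
  show ?case by auto
next
  case (Suc v)
  have IHE: "prefix_sat l (alt QEx v) (GeE v g (length vs) s t) vs = (term_val l vs s + g \<le> term_val l vs t)"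
    if "\<forall>x\<in>set vs. x \<le> l" "tok (length vs) s" "tok (length vs) t" "1 \<le> g" "OKE v g" for g vs s t
    using Suc.IH that by blast
  have IHA: "prefix_sat l (alt QAll v) (GeA v g (length vs) s t) vs = (term_val l vs s + g \<le> term_val l vs t)"
    if "\<forall>x\<in>set vs. x \<le> l" "tok (length vs) s" "tok (length vs) t" "1 \<le> g" "OKA v g" for g vs s t
    using Suc.IH that by blast
  have FSE: "prefix_sat l (alt QAll (v-1)) (GeE v g (length vs) s t) (vs@[a]) = PE g (term_val l vs s) (term_val l vs t) a"
    if "\<forall>x\<in>set vs. x \<le> l" "tok (length vs) s" "tok (length vs) t" "1 \<le> g" "OKE v g" "0 < v" "a \<in> {0..l}" for g vs s t a
    using Suc.IH that by blast
  have FSA: "prefix_sat l (alt QEx (v-1)) (GeA v g (length vs) s t) (vs@[b]) = QA g (term_val l vs s) (term_val l vs t) b"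
    if "\<forall>x\<in>set vs. x \<le> l" "tok (length vs) s" "tok (length vs) t" "1 \<le> g" "OKA v g" "0 < v" "b \<in> {0..l}" for g vs s t b
    using Suc.IH that by blast
  show ?case
  proof (intro allI impI)
    fix g :: nat and vs :: "nat list" and s t :: trm
    assume wf: "\<forall>x\<in>set vs. x \<le> l" and ts: "tok (length vs) s" and tt: "tok (length vs) t" and g1: "1 \<le> g"
    define j where "j = length vs"
    define sv where "sv = term_val l vs s"
    define tv where "tv = term_val l vs t"
    have svl: "sv \<le> l" "tv \<le> l" using term_val_le wf ts tt by (auto simp: sv_def tv_def)
    have common: "(\<forall>x\<in>set (vs @ [a]). x \<le> l) \<and> tok (length (vs @ [a])) s \<and> tok (length (vs @ [a])) t
       \<and> tok (length (vs @ [a])) (Var j) \<and> term_val l (vs @ [a]) s = sv \<and> term_val l (vs @ [a]) t = tv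
       \<and> term_val l (vs @ [a]) (Var j) = a \<and> length (vs @ [a]) = Suc j" if a: "a \<in> {0..l}" for a
      using wf a ts tt by (auto simp: tok_def j_def sv_def tv_def)
    have FSE': "\<forall>a\<in>{0..l}. prefix_sat l (alt QAll v) (GeE (Suc v) g j s t) (vs@[a]) = PE g sv tv a"
      if oke: "OKE (Suc v) g"
    proof
      fix a assume a: "a \<in> {0..l}"
      note c = common[OF a]
      show "prefix_sat l (alt QAll v) (GeE (Suc v) g j s t) (vs@[a]) = PE g sv tv a"
      proof (cases "g \<le> 1")
        case True
        then have e: "GeE (Suc v) g j s t = Less s t" by simp
        have "\<forall>i\<in>qf_vars (Less s t). i < length (vs @ [a])" using c by (auto simp: tok_def)
        then show ?thesis unfolding e using c True by (simp add: prefix_sat_qf PE_def)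
      next
        case False
        with oke have ok1: "OKA v ((g+1) div 2)" "OKA v (g div 2)" by auto
        define X where "X = (if v = 0 then Conj (GeA v ((g+1) div 2) (Suc j) s (Var j)) (GeA v (g div 2) (Suc j) (Var j) t)
            else ite (Leq (Var (Suc j)) (Var j)) (GeA v ((g+1) div 2) (Suc j) s (Var j)) (GeA v (g div 2) (Suc j) (Var j) t))"
        have eq: "GeE (Suc v) g j s t = ite (Conj (Less s (Var j)) (Less (Var j) t)) X FF" using False by (simp add: X_def)
        have cv: "\<forall>i\<in>qf_vars (Conj (Less s (Var j)) (Less (Var j) t)). i < length (vs @ [a])" using c by (auto simp: tok_def)
        have s1: "prefix_sat l (alt QAll v) (GeE (Suc v) g j s t) (vs @ [a])
           = (if sv < a \<and> a < tv then prefix_sat l (alt QAll v) X (vs @ [a]) else False)"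
          unfolding eq prefix_sat_ite[OF cv] using c by (simp add: prefix_sat_qf)
        have Xsem: "prefix_sat l (alt QAll v) X (vs @ [a]) = (sv + (g+1) div 2 \<le> a \<and> a + g div 2 \<le> tv)"
          if r: "sv < a" "a < tv"
        proof (cases v)
          case 0
          then have "g = 2" using ok1 False by auto
          then show ?thesis using 0 c r by (simp add: X_def)
        next
          case (Suc v')
          have Xe: "X = ite (Leq (Var (Suc j)) (Var j)) (GeA v ((g+1) div 2) (Suc j) s (Var j)) (GeA v (g div 2) (Suc j) (Var j) t)"
            using Suc by (simp add: X_def)
          have "prefix_sat l (alt QAll v) X (vs @ [a])
              = (\<forall>b\<in>{0..l}. prefix_sat l (alt QEx v') X (vs @ [a] @ [b]))" using Suc by simp
          also have "\<dots> = (\<forall>b\<in>{0..l}. if b \<le> a then QA ((g+1) div 2) sv a b else QA (g div 2) a tv b)"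
          proof (intro ball_cong refl)
            fix b assume b: "b \<in> {0..l}"
            have cv2: "\<forall>i\<in>qf_vars (Leq (Var (Suc j)) (Var j)). i < length ((vs @ [a]) @ [b])" using c by auto
            have q1: "prefix_sat l (alt QEx (v-1)) (GeA v ((g+1) div 2) (length (vs @ [a])) s (Var j)) ((vs @ [a]) @ [b])
                 = QA ((g+1) div 2) sv a b"
              using FSA[of "vs @ [a]" s "Var j" "(g+1) div 2" b] c ok1 False Suc b by (auto simp del: GeE.simps GeA.simps)
            have q2: "prefix_sat l (alt QEx (v-1)) (GeA v (g div 2) (length (vs @ [a])) (Var j) t) ((vs @ [a]) @ [b])
                 = QA (g div 2) a tv b"
              using FSA[of "vs @ [a]" "Var j" t "g div 2" b] c ok1 False Suc b by (auto simp del: GeE.simps GeA.simps)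
            have vb: "term_val l ((vs @ [a]) @ [b]) (Var (Suc j)) = b" "term_val l ((vs @ [a]) @ [b]) (Var j) = a"
              using c by (auto simp: nth_append j_def)
            show "prefix_sat l (alt QEx v') X (vs @ [a] @ [b]) = (if b \<le> a then QA ((g+1) div 2) sv a b else QA (g div 2) a tv b)"
              using prefix_sat_ite[OF cv2, of l "alt QEx v'"] q1 q2 vb c Suc unfolding Xe by (simp del: GeE.simps GeA.simps)
          qed
          also have "\<dots> = (sv + (g+1) div 2 \<le> a \<and> a + g div 2 \<le> tv)"
            using M3[of sv a tv l "(g+1) div 2" "g div 2"] r svl False by auto
          finally show ?thesis .
        qed
        show ?thesis using s1 Xsem False by (auto simp: PE_def)
      qed
    qed
    have FSA': "\<forall>b\<in>{0..l}. prefix_sat l (alt QEx v) (GeA (Suc v) g j s t) (vs@[b]) = QA g sv tv b"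
      if oka: "OKA (Suc v) g"
    proof
      fix b assume b: "b \<in> {0..l}"
      note c = common[OF b]
      show "prefix_sat l (alt QEx v) (GeA (Suc v) g j s t) (vs@[b]) = QA g sv tv b"
      proof (cases "g \<le> 1")
        case True
        then have e: "GeA (Suc v) g j s t = Less s t" by simp
        have "\<forall>i\<in>qf_vars (Less s t). i < length (vs @ [b])" using c by (auto simp: tok_def)
        then show ?thesis unfolding e using c True by (simp add: prefix_sat_qf QA_def)
      next
        case False
        define k where "k = (g+2) div 2"
        have k: "2 \<le> k" "1 \<le> g + 1 - k" using False by (auto simp: k_def)
        from False oka have ok1: "OKE v k" "OKE v (g + 1 - k)" by (auto simp: k_def)
        obtain v' where v': "v = Suc v'" using ok1 k by (cases v) auto
        define X where "X = ite (Leq (Var (Suc j)) (Var j)) (GeE v k (Suc j) s (Var j)) (GeE v (g + 1 - k) (Suc j) (Var j) t)"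
        have eq: "GeA (Suc v) g j s t = ite (Conj (Less s (Var j)) (Leq (Var j) t)) X (Less s t)"
          using False v' by (simp add: X_def k_def)
        have cv: "\<forall>i\<in>qf_vars (Conj (Less s (Var j)) (Leq (Var j) t)). i < length (vs @ [b])" using c by (auto simp: tok_def)
        have lv: "\<forall>i\<in>qf_vars (Less s t). i < length (vs @ [b])" using c by (auto simp: tok_def)
        have s1: "prefix_sat l (alt QEx v) (GeA (Suc v) g j s t) (vs @ [b])
           = (if sv < b \<and> b \<le> tv then prefix_sat l (alt QEx v) X (vs @ [b]) else sv < tv)"
          unfolding eq prefix_sat_ite[OF cv] using c lv by (simp add: prefix_sat_qf)
        have Xsem: "prefix_sat l (alt QEx v) X (vs @ [b]) = (sv + k \<le> b \<or> b + (g + 1 - k) \<le> tv)"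
          if r: "sv < b" "b \<le> tv"
        proof -
          have "prefix_sat l (alt QEx v) X (vs @ [b])
              = (\<exists>a\<in>{0..l}. prefix_sat l (alt QAll v') X (vs @ [b] @ [a]))" using v' by simp
          also have "\<dots> = (\<exists>a\<in>{0..l}. if a \<le> b then PE k sv b a else PE (g + 1 - k) b tv a)"
          proof (intro bex_cong refl)
            fix a assume a: "a \<in> {0..l}"
            have cv2: "\<forall>i\<in>qf_vars (Leq (Var (Suc j)) (Var j)). i < length ((vs @ [b]) @ [a])" using c by auto
            have q1: "prefix_sat l (alt QAll (v-1)) (GeE v k (length (vs @ [b])) s (Var j)) ((vs @ [b]) @ [a])
                 = PE k sv b a"
              using FSE[of "vs @ [b]" s "Var j" k a] c ok1 k v' a by (auto simp del: GeE.simps GeA.simps)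
            have q2: "prefix_sat l (alt QAll (v-1)) (GeE v (g + 1 - k) (length (vs @ [b])) (Var j) t) ((vs @ [b]) @ [a])
                 = PE (g + 1 - k) b tv a"
              using FSE[of "vs @ [b]" "Var j" t "g + 1 - k" a] c ok1 k v' a by (auto simp del: GeE.simps GeA.simps)
            have vb: "term_val l ((vs @ [b]) @ [a]) (Var (Suc j)) = a" "term_val l ((vs @ [b]) @ [a]) (Var j) = b"
              using c by (auto simp: nth_append j_def)
            show "prefix_sat l (alt QAll v') X (vs @ [b] @ [a]) = (if a \<le> b then PE k sv b a else PE (g + 1 - k) b tv a)"
              using prefix_sat_ite[OF cv2, of l "alt QAll v'"] q1 q2 vb c v' unfolding X_def by (simp del: GeE.simps GeA.simps)
          qed
          also have "\<dots> = (sv + k \<le> b \<or> b + (g + 1 - k) \<le> tv)"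
            using M4[of b tv l k "g + 1 - k" sv] r svl k by auto
          finally show ?thesis .
        qed
        show ?thesis using s1 Xsem False by (auto simp: QA_def k_def)
      qed
    qed
    have FullE: "prefix_sat l (alt QEx (Suc v)) (GeE (Suc v) g j s t) vs = (sv + g \<le> tv)" if "OKE (Suc v) g"
      using FSE'[OF that] M1[of tv l g sv] svl g1 by simp
    have FullA: "prefix_sat l (alt QAll (Suc v)) (GeA (Suc v) g j s t) vs = (sv + g \<le> tv)" if "OKA (Suc v) g"
      using FSA'[OF that] M2[of sv l tv g] svl g1 by simp
    show "(OKE (Suc v) g \<longrightarrow> (prefix_sat l (alt QEx (Suc v)) (GeE (Suc v) g (length vs) s t) vs = (term_val l vs s + g \<le> term_val l vs t))
       \<and> (0 < Suc v \<longrightarrow> (\<forall>a\<in>{0..l}. prefix_sat l (alt QAll (Suc v - 1)) (GeE (Suc v) g (length vs) s t) (vs@[a]) = PE g (term_val l vs s) (term_val l vs t) a)))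
     \<and> (OKA (Suc v) g \<longrightarrow> (prefix_sat l (alt QAll (Suc v)) (GeA (Suc v) g (length vs) s t) vs = (term_val l vs s + g \<le> term_val l vs t))
       \<and> (0 < Suc v \<longrightarrow> (\<forall>b\<in>{0..l}. prefix_sat l (alt QEx (Suc v - 1)) (GeA (Suc v) g (length vs) s t) (vs@[b]) = QA g (term_val l vs s) (term_val l vs t) b)))"
      using FSE' FSA' FullE FullA unfolding j_def sv_def tv_def by simp
  qed
qed



lemma mainE: "\<forall>x\<in>set vs. x \<le> l \<Longrightarrow> tok (length vs) s \<Longrightarrow> tok (length vs) t \<Longrightarrow> 1 \<le> g \<Longrightarrow> OKE v g \<Longrightarrow>
  prefix_sat l (alt QEx v) (GeE v g (length vs) s t) vs = (term_val l vs s + g \<le> term_val l vs t)"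
  using main[of l v] by blast

lemma mainA: "\<forall>x\<in>set vs. x \<le> l \<Longrightarrow> tok (length vs) s \<Longrightarrow> tok (length vs) t \<Longrightarrow> 1 \<le> g \<Longrightarrow> OKA v g \<Longrightarrow>
  prefix_sat l (alt QAll v) (GeA v g (length vs) s t) vs = (term_val l vs s + g \<le> term_val l vs t)"
  using main[of l v] by blast

fun EqA :: "nat \<Rightarrow> nat \<Rightarrow> nat \<Rightarrow> trm \<Rightarrow> trm \<Rightarrow> qf" where
  "EqA 0 n j s t = FF"
| "EqA (Suc v) n j s t = ite (Eq (Var j) t) (GeE v n (Suc j) s t)
     (ite (Conj (Less s (Var j)) (Less (Var j) t)) (Neg (GeA v n (Suc j) s (Var j))) TT)"

definition EqE :: "nat \<Rightarrow> nat \<Rightarrow> nat \<Rightarrow> trm \<Rightarrow> trm \<Rightarrow> qf" where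
  "EqE v n j s t = ite (Less (Var j) t)
     (ite (Leq (Var (Suc j)) (Var j)) (EqA (Suc v) ((n+1) div 2) (Suc j) s (Var j)) (EqA (Suc v) (n div 2) (Suc j) (Var j) t)) FF"

lemma EqA_FS:
  assumes wf: "\<forall>x\<in>set vs. x \<le> l" and ts: "tok (length vs) s" and tt: "tok (length vs) t"
    and n1: "1 \<le> n" and oke: "OKE v n" and oka: "OKA v n" and z: "z \<in> {0..l}"
  shows "prefix_sat l (alt QEx v) (EqA (Suc v) n (length vs) s t) (vs @ [z])
       = RA n (term_val l vs s) (term_val l vs t) z"
proof -
  let ?vs = "vs @ [z]"
  let ?j = "length vs"
  have wf': "\<forall>x\<in>set ?vs. x \<le> l" using wf z by auto
  have tk: "tok (length ?vs) s" "tok (length ?vs) t" "tok (length ?vs) (Var ?j)" using ts tt by (auto simp: tok_def)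
  have tv: "term_val l ?vs s = term_val l vs s" "term_val l ?vs t = term_val l vs t" "term_val l ?vs (Var ?j) = z"
    using ts tt by auto
  have c1: "\<forall>i\<in>qf_vars (Eq (Var ?j) t). i < length ?vs" using tk by (auto simp: tok_def)
  have c2: "\<forall>i\<in>qf_vars (Conj (Less s (Var ?j)) (Less (Var ?j) t)). i < length ?vs" using tk by (auto simp: tok_def)
  have g: "prefix_sat l (alt QEx v) (GeE v n (Suc ?j) s t) ?vs = (term_val l vs s + n \<le> term_val l vs t)"
    using mainE[OF wf' tk(1) tk(2) n1 oke] tv by simp
  have a: "prefix_sat l (alt QEx v) (Neg (GeA v n (Suc ?j) s (Var ?j))) ?vs = (\<not> term_val l vs s + n \<le> z)"
    using prefix_sat_neg[of l "alt QAll v" "GeA v n (Suc ?j) s (Var ?j)" ?vs] mainA[OF wf' tk(1) tk(3) n1 oka] tv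
    by (simp add: map_flipq_alt)
  have tt': "prefix_sat l (alt QEx v) TT ?vs = True" by (simp add: prefix_sat_qf)
  have q1: "qf_sat l ?vs (Eq (Var ?j) t) = (z = term_val l vs t)" using tv by simp
  have q2: "qf_sat l ?vs (Conj (Less s (Var ?j)) (Less (Var ?j) t)) = (term_val l vs s < z \<and> z < term_val l vs t)"
    using tv by simp
  have "prefix_sat l (alt QEx v) (EqA (Suc v) n (length vs) s t) (vs @ [z])
     = (if z = term_val l vs t then prefix_sat l (alt QEx v) (GeE v n (Suc ?j) s t) ?vs
        else if term_val l vs s < z \<and> z < term_val l vs t
        then prefix_sat l (alt QEx v) (Neg (GeA v n (Suc ?j) s (Var ?j))) ?vs
        else prefix_sat l (alt QEx v) TT ?vs)"
    by (simp only: EqA.simps prefix_sat_ite[OF c1] prefix_sat_ite[OF c2] q1 q2)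
  also have "\<dots> = (if z = term_val l vs t then term_val l vs s + n \<le> term_val l vs t
        else if term_val l vs s < z \<and> z < term_val l vs t then \<not> term_val l vs s + n \<le> z else True)"
    by (simp only: g a tt')
  finally show ?thesis by (simp only: RA_def)
qed

lemma EqA_sem:
  assumes wf: "\<forall>x\<in>set vs. x \<le> l" and ts: "tok (length vs) s" and tt: "tok (length vs) t"
    and n1: "1 \<le> n" and oke: "OKE v n" and oka: "OKA v n"
  shows "prefix_sat l (alt QAll (Suc v)) (EqA (Suc v) n (length vs) s t) vs
       = (term_val l vs s + n = term_val l vs t)"
proof -
  have "prefix_sat l (alt QAll (Suc v)) (EqA (Suc v) n (length vs) s t) vs
     = (\<forall>z\<in>{0..l}. RA n (term_val l vs s) (term_val l vs t) z)"
    using EqA_FS[OF wf ts tt n1 oke oka] by (auto simp del: EqA.simps)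
  also have "\<dots> = (term_val l vs s + n = term_val l vs t)"
    using M6[of "term_val l vs t" l n] term_val_le[OF wf tt] n1 by simp
  finally show ?thesis .
qed

lemma EqE_sem:
  assumes wf: "\<forall>x\<in>set vs. x \<le> l" and ts: "tok (length vs) s" and tt: "tok (length vs) t"
    and n2: "2 \<le> n" and ok: "OKE v ((n+1) div 2)" "OKA v ((n+1) div 2)" "OKE v (n div 2)" "OKA v (n div 2)"
  shows "prefix_sat l (alt QEx (Suc (Suc v))) (EqE v n (length vs) s t) vs
       = (term_val l vs s + n = term_val l vs t)"
proof -
  define sv where "sv = term_val l vs s"
  define tv where "tv = term_val l vs t"
  have tvl: "tv \<le> l" using term_val_le[OF wf tt] by (simp add: tv_def)
  have "prefix_sat l (alt QEx (Suc (Suc v))) (EqE v n (length vs) s t) vs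
      = (\<exists>a\<in>{0..l}. a < tv \<and> (\<forall>b\<in>{0..l}. if b \<le> a then RA ((n+1) div 2) sv a b else RA (n div 2) a tv b))"
  proof -
    have "prefix_sat l (alt QEx (Suc (Suc v))) (EqE v n (length vs) s t) vs
       = (\<exists>a\<in>{0..l}. prefix_sat l (alt QAll (Suc v)) (EqE v n (length vs) s t) (vs @ [a]))" by simp
    also have "\<dots> = (\<exists>a\<in>{0..l}. a < tv \<and> (\<forall>b\<in>{0..l}. if b \<le> a then RA ((n+1) div 2) sv a b else RA (n div 2) a tv b))"
    proof (intro bex_cong refl)
      fix a assume a: "a \<in> {0..l}"
      let ?vs = "vs @ [a]"
      let ?j = "length vs"
      have wf': "\<forall>x\<in>set ?vs. x \<le> l" using wf a by auto
      have tk: "tok (length ?vs) s" "tok (length ?vs) t" "tok (length ?vs) (Var ?j)" using ts tt by (auto simp: tok_def)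
      have tv': "term_val l ?vs s = sv" "term_val l ?vs t = tv" "term_val l ?vs (Var ?j) = a"
        using ts tt by (auto simp: sv_def tv_def)
      have c1: "\<forall>i\<in>qf_vars (Less (Var ?j) t). i < length ?vs" using tk by (auto simp: tok_def)
      have ff: "prefix_sat l (alt QAll (Suc v)) FF ?vs = False" by (subst prefix_sat_qf) auto
      have inner: "prefix_sat l (alt QAll (Suc v)) (ite (Leq (Var (Suc ?j)) (Var ?j)) (EqA (Suc v) ((n+1) div 2) (Suc ?j) s (Var ?j)) (EqA (Suc v) (n div 2) (Suc ?j) (Var ?j) t)) ?vs
         = (\<forall>b\<in>{0..l}. if b \<le> a then RA ((n+1) div 2) sv a b else RA (n div 2) a tv b)"
      proof -
        have "prefix_sat l (alt QAll (Suc v)) (ite (Leq (Var (Suc ?j)) (Var ?j)) (EqA (Suc v) ((n+1) div 2) (Suc ?j) s (Var ?j)) (EqA (Suc v) (n div 2) (Suc ?j) (Var ?j) t)) ?vs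
          = (\<forall>b\<in>{0..l}. prefix_sat l (alt QEx v) (ite (Leq (Var (Suc ?j)) (Var ?j)) (EqA (Suc v) ((n+1) div 2) (Suc ?j) s (Var ?j)) (EqA (Suc v) (n div 2) (Suc ?j) (Var ?j) t)) (?vs @ [b]))"
          by simp
        also have "\<dots> = (\<forall>b\<in>{0..l}. if b \<le> a then RA ((n+1) div 2) sv a b else RA (n div 2) a tv b)"
        proof (intro ball_cong refl)
          fix b assume b: "b \<in> {0..l}"
          have cv: "\<forall>i\<in>qf_vars (Leq (Var (Suc ?j)) (Var ?j)). i < length (?vs @ [b])" by auto
          have vb: "term_val l (?vs @ [b]) (Var (Suc ?j)) = b" "term_val l (?vs @ [b]) (Var ?j) = a"
            by (auto simp: nth_append)
          have e1: "prefix_sat l (alt QEx v) (EqA (Suc v) ((n+1) div 2) (length ?vs) s (Var ?j)) (?vs @ [b]) = RA ((n+1) div 2) sv a b"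
            using EqA_FS[OF wf' tk(1) tk(3) _ ok(1) ok(2) b] n2 tv' by simp
          have e2: "prefix_sat l (alt QEx v) (EqA (Suc v) (n div 2) (length ?vs) (Var ?j) t) (?vs @ [b]) = RA (n div 2) a tv b"
            using EqA_FS[OF wf' tk(3) tk(2) _ ok(3) ok(4) b] n2 tv' by simp
          show "prefix_sat l (alt QEx v) (ite (Leq (Var (Suc ?j)) (Var ?j)) (EqA (Suc v) ((n+1) div 2) (Suc ?j) s (Var ?j)) (EqA (Suc v) (n div 2) (Suc ?j) (Var ?j) t)) (?vs @ [b])
              = (if b \<le> a then RA ((n+1) div 2) sv a b else RA (n div 2) a tv b)"
            unfolding prefix_sat_ite[OF cv] using vb e1 e2 by (simp del: EqA.simps)
        qed
        finally show ?thesis .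
      qed
      show "prefix_sat l (alt QAll (Suc v)) (EqE v n (length vs) s t) (vs @ [a])
         = (a < tv \<and> (\<forall>b\<in>{0..l}. if b \<le> a then RA ((n+1) div 2) sv a b else RA (n div 2) a tv b))"
        unfolding EqE_def prefix_sat_ite[OF c1] using inner ff tv' by (simp del: EqA.simps)
    qed
    finally show ?thesis .
  qed
  also have "\<dots> = (\<exists>a\<in>{0..l}. a < tv \<and> sv + (n+1) div 2 = a \<and> a + n div 2 = tv)"
  proof (intro bex_cong refl)
    fix a assume "a \<in> {0..l}"
    have n12: "1 \<le> (n+1) div 2" "1 \<le> n div 2" using n2 by auto
    show "(a < tv \<and> (\<forall>b\<in>{0..l}. if b \<le> a then RA ((n+1) div 2) sv a b else RA (n div 2) a tv b))
        = (a < tv \<and> sv + (n+1) div 2 = a \<and> a + n div 2 = tv)"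
    proof (cases "a < tv")
      case True
      show ?thesis using M7[OF True tvl n12] True by simp
    qed simp
  qed
  also have "\<dots> = (sv + n = tv)"
  proof
    assume "\<exists>a\<in>{0..l}. a < tv \<and> sv + (n+1) div 2 = a \<and> a + n div 2 = tv"
    then show "sv + n = tv" by auto
  next
    assume h: "sv + n = tv"
    show "\<exists>a\<in>{0..l}. a < tv \<and> sv + (n+1) div 2 = a \<and> a + n div 2 = tv"
      using h n2 tvl by (intro bexI[of _ "sv + (n+1) div 2"]) auto
  qed
  finally show ?thesis by (simp add: sv_def tv_def)
qed



lemma vars_EqA: "qf_vars (EqA v n j s t) \<subseteq> {..<j+v} \<union> term_vars s \<union> term_vars t"
proof (cases v)
  case 0 then show ?thesis by simp
next
  case (Suc v')
  have a: "qf_vars (GeE v' n (Suc j) s t) \<subseteq> {..<Suc j+v'} \<union> term_vars s \<union> term_vars t"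
    using vars_Ge by blast
  have b: "qf_vars (GeA v' n (Suc j) s (Var j)) \<subseteq> {..<Suc j+v'} \<union> term_vars s \<union> term_vars (Var j)"
    using vars_Ge by blast
  show ?thesis using a b Suc by auto
qed

lemma vars_EqE: "qf_vars (EqE v n j s t) \<subseteq> {..<j+Suc (Suc v)} \<union> term_vars s \<union> term_vars t"
proof -
  have a: "qf_vars (EqA (Suc v) ((n+1) div 2) (Suc j) s (Var j)) \<subseteq> {..<Suc j + Suc v} \<union> term_vars s \<union> term_vars (Var j)"
    by (rule vars_EqA)
  have b: "qf_vars (EqA (Suc v) (n div 2) (Suc j) (Var j) t) \<subseteq> {..<Suc j + Suc v} \<union> term_vars (Var j) \<union> term_vars t"
    by (rule vars_EqA)
  show ?thesis using a b unfolding EqE_def by (auto simp del: EqA.simps)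
qed

declare OKE.simps[simp del] OKA.simps[simp del] qstarE.simps[simp del] qstarA.simps[simp del]

primrec Vs :: "nat \<Rightarrow> nat" where
  "Vs 0 = 1"
| "Vs (Suc i) = 4 * Vs i - 1"

lemma Vs_pos: "1 \<le> Vs i" by (induction i) auto

lemma Vs_ge: "i + 1 \<le> Vs i" by (induction i) (use Vs_pos in auto)

lemma OK_bounds: "(\<forall>n. n \<le> 2 * Vs i \<longrightarrow> OKE (2*i+1) n) \<and> (\<forall>n. n \<le> Vs i \<longrightarrow> OKA (2*i) n)"
proof (induction i)
  case 0 then show ?case by (auto simp: OKE.simps OKA.simps)
next
  case (Suc i)
  have V: "1 \<le> Vs i" by (rule Vs_pos)
  have A: "OKA (2 * Suc i) n" if "n \<le> Vs (Suc i)" for n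
  proof -
    have "(n+2) div 2 \<le> 2 * Vs i" "n + 1 - (n+2) div 2 \<le> 2 * Vs i" using that V by auto
    then have "OKE (2*i+1) ((n+2) div 2)" "OKE (2*i+1) (n + 1 - (n+2) div 2)" using Suc.IH by auto
    moreover have "2 * Suc i = Suc (2 * i + 1)" by simp
    ultimately show ?thesis by (simp only: OKA.simps) blast
  qed
  have E: "OKE (2 * Suc i + 1) n" if "n \<le> 2 * Vs (Suc i)" for n
  proof -
    have "(n+1) div 2 \<le> Vs (Suc i)" "n div 2 \<le> Vs (Suc i)" using that by auto
    then have "OKA (2 * Suc i) ((n+1) div 2)" "OKA (2 * Suc i) (n div 2)" using A by auto
    moreover have "2 * Suc i + 1 = Suc (2 * Suc i)" by simp
    ultimately show ?thesis by (simp only: OKE.simps) blast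
  qed
  show ?case using A E by blast
qed

lemma OK_mono: "(OKE v n \<longrightarrow> OKE (Suc v) n) \<and> (OKA v n \<longrightarrow> OKA (Suc v) n)"
proof (induction v arbitrary: n)
  case 0 then show ?case by (auto simp: OKE.simps OKA.simps)
next
  case (Suc v)
  have e: "OKE (Suc (Suc v)) n" if "OKE (Suc v) n"
    using that Suc.IH[of "(n+1) div 2"] Suc.IH[of "n div 2"] by (simp only: OKE.simps) blast
  have a: "OKA (Suc (Suc v)) n" if "OKA (Suc v) n"
    using that Suc.IH[of "(n+2) div 2"] Suc.IH[of "n + 1 - (n+2) div 2"] by (simp only: OKA.simps) blast
  show ?case using e a by blast
qed

lemma qE_eq: "qstarE n = (if n \<le> 1 then 2 else qstarA ((n+1) div 2) + 1)"
proof -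
  have "qstarE n = (if n \<le> 1 then 2 else if even n then qstarA (n div 2) + 1 else qstarA (n div 2 + 1) + 1)"
    by (rule qstarE.simps)
  also have "\<dots> = (if n \<le> 1 then 2 else qstarA ((n+1) div 2) + 1)"
    by (auto elim!: evenE oddE)
  finally show ?thesis .
qed

lemma qA_eq: "qstarA n = (if n \<le> 1 then 1 else if n = 2 then 2 else qstarE (n div 2) + 1)"
  by (rule qstarA.simps)

lemma qA_pos: "1 \<le> qstarA n" by (subst qA_eq) auto
lemma qE_pos: "1 \<le> qstarE n" by (subst qE_eq) auto

lemma qbounds: "(\<forall>n. Vs i \<le> n \<longrightarrow> 2*i+1 \<le> qstarE n \<and> 2*i+1 \<le> qstarA n)
   \<and> (\<forall>n. 2 * Vs i \<le> n + 1 \<longrightarrow> 2*i+2 \<le> qstarE n) \<and> (\<forall>n. 2 * Vs i \<le> n \<longrightarrow> 2*i+2 \<le> qstarA n)"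
proof (induction i)
  case 0
  have a: "2 \<le> qstarE n" for n
    using qA_pos[of "(n+1) div 2"] by (subst qE_eq) auto
  have b: "2 \<le> qstarA n" if "2 \<le> n" for n
    using qE_pos[of "n div 2"] that by (subst qA_eq) auto
  show ?case
  proof (intro conjI allI impI)
    fix n assume "Vs 0 \<le> n"
    show "2*0+1 \<le> qstarE n" using qE_pos[of n] by simp
  next
    fix n assume "Vs 0 \<le> n"
    show "2*0+1 \<le> qstarA n" using qA_pos[of n] by simp
  next
    fix n assume "2 * Vs 0 \<le> n + 1"
    show "2*0+2 \<le> qstarE n" using a[of n] by simp
  next
    fix n assume "2 * Vs 0 \<le> n"
    then have "2 \<le> n" by simp
    then show "2*0+2 \<le> qstarA n" using b[of n] by simp
  qed
next
  case (Suc i)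
  have V: "1 \<le> Vs i" by (rule Vs_pos)
  have Q: "2*(Suc i)+1 \<le> qstarE n \<and> 2*(Suc i)+1 \<le> qstarA n" if n: "Vs (Suc i) \<le> n" for n
  proof
    have n3: "3 \<le> n" using n V by auto
    have "2 * Vs i \<le> (n+1) div 2" using n by auto
    then have "2*i+2 \<le> qstarA ((n+1) div 2)" using Suc.IH by blast
    then show "2*(Suc i)+1 \<le> qstarE n" using n3 by (subst qE_eq) auto
    have "2 * Vs i \<le> n div 2 + 1" using n by auto
    then have "2*i+2 \<le> qstarE (n div 2)" using Suc.IH by blast
    then show "2*(Suc i)+1 \<le> qstarA n" using n3 by (subst qA_eq) auto
  qed
  have R1: "2*(Suc i)+2 \<le> qstarE n" if n: "2 * Vs (Suc i) \<le> n + 1" for n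
  proof -
    have n3: "3 \<le> n" using n V by auto
    have "Vs (Suc i) \<le> (n+1) div 2" using n by auto
    then have "2*(Suc i)+1 \<le> qstarA ((n+1) div 2)" using Q by blast
    then show ?thesis using n3 by (subst qE_eq) auto
  qed
  have R2: "2*(Suc i)+2 \<le> qstarA n" if n: "2 * Vs (Suc i) \<le> n" for n
  proof -
    have n3: "3 \<le> n" using n V by auto
    have "Vs (Suc i) \<le> n div 2" using n by auto
    then have "2*(Suc i)+1 \<le> qstarE (n div 2)" using Q by blast
    then show ?thesis using n3 by (subst qA_eq) auto
  qed
  show ?case using Q R1 R2 by blast
qed

lemma cases_n:
  assumes "1 \<le> n"
  shows "n = 1 \<or> (\<exists>i. Vs i < n \<and> n \<le> 2 * Vs i) \<or> (\<exists>i. 2 * Vs i < n \<and> n \<le> Vs (Suc i))"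
proof -
  have "n \<le> Vs j \<Longrightarrow> ?thesis" for j
  proof (induction j)
    case 0 then show ?case using assms by auto
  next
    case (Suc j)
    show ?case
    proof (cases "n \<le> Vs j")
      case True then show ?thesis using Suc.IH by blast
    next
      case False
      show ?thesis
      proof (cases "n \<le> 2 * Vs j")
        case True
        then have "Vs j < n \<and> n \<le> 2 * Vs j" using False by auto
        then show ?thesis by blast
      next
        case False2: False
        then have "2 * Vs j < n \<and> n \<le> Vs (Suc j)" using Suc.prems by auto
        then show ?thesis by blast
      qed
    qed
  qed
  moreover have "n \<le> Vs n" using Vs_ge[of n] by simp
  ultimately show ?thesis by blast
qed

lemma final_A:
  assumes n1: "1 \<le> n" and oke: "OKE v n" and oka: "OKA v n" and od: "odd (Suc v)" and len: "Suc v \<le> qstar n + 2"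
  shows "\<exists>\<phi> :: prenex. is_sentence \<phi>
           \<and> holds_in_L n \<phi>
           \<and> (\<forall>m. m \<ge> 1 \<longrightarrow> m \<noteq> n \<longrightarrow> \<not> holds_in_L m \<phi>)
           \<and> length (fst \<phi>) \<le> qstar n + 2
           \<and> alternating_ends_forall (fst \<phi>)"
proof (rule exI[of _ "(alt QAll (Suc v), EqA (Suc v) n 0 Cmin Cmax)"], intro conjI)
  let ?\<phi> = "(alt QAll (Suc v), EqA (Suc v) n 0 Cmin Cmax)"
  have sem: "holds_in_L m ?\<phi> = (n = m)" for m
  proof -
    have w: "\<forall>x\<in>set ([]::nat list). x \<le> m" by simp
    have t1: "tok (length ([]::nat list)) Cmin" "tok (length ([]::nat list)) Cmax" by simp_all
    note e0 = EqA_sem[OF w t1 n1 oke oka]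
    show ?thesis unfolding holds_in_L_def fst_conv snd_conv using e0 by (simp only: list.size(3) term_val.simps add_0)
  qed
  show "is_sentence ?\<phi>" unfolding is_sentence_def fst_conv snd_conv length_alt
    using vars_EqA[of "Suc v" n 0 Cmin Cmax] by (auto simp del: EqA.simps)
  show "holds_in_L n ?\<phi>" unfolding sem by simp
  show "\<forall>m. m \<ge> 1 \<longrightarrow> m \<noteq> n \<longrightarrow> \<not> holds_in_L m ?\<phi>" unfolding sem by auto
  show "length (fst ?\<phi>) \<le> qstar n + 2" using len by (simp only: fst_conv length_alt)
  have "alternating_ends_forall (alt QAll (Suc v))" by (rule alt_alternating) (use od in auto)
  then show "alternating_ends_forall (fst ?\<phi>)" by (simp only: fst_conv)
qed

lemma final_E:
  assumes ev: "even v" and n2: "2 \<le> n" and ok: "OKE v ((n+1) div 2)" "OKA v ((n+1) div 2)" "OKE v (n div 2)" "OKA v (n div 2)"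
    and len: "Suc (Suc v) \<le> qstar n + 2"
  shows "\<exists>\<phi> :: prenex. is_sentence \<phi>
           \<and> holds_in_L n \<phi>
           \<and> (\<forall>m. m \<ge> 1 \<longrightarrow> m \<noteq> n \<longrightarrow> \<not> holds_in_L m \<phi>)
           \<and> length (fst \<phi>) \<le> qstar n + 2
           \<and> alternating_ends_forall (fst \<phi>)"
proof (rule exI[of _ "(alt QEx (Suc (Suc v)), EqE v n 0 Cmin Cmax)"], intro conjI)
  let ?\<phi> = "(alt QEx (Suc (Suc v)), EqE v n 0 Cmin Cmax)"
  have sem: "holds_in_L m ?\<phi> = (n = m)" for m
  proof -
    have w: "\<forall>x\<in>set ([]::nat list). x \<le> m" by simp
    have t1: "tok (length ([]::nat list)) Cmin" "tok (length ([]::nat list)) Cmax" by simp_all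
    note e0 = EqE_sem[OF w t1 n2 ok]
    show ?thesis unfolding holds_in_L_def fst_conv snd_conv using e0 by (simp only: list.size(3) term_val.simps add_0)
  qed
  have vv: "qf_vars (EqE v n 0 Cmin Cmax) \<subseteq> {..<Suc (Suc v)}" using vars_EqE[of v n 0 Cmin Cmax] by simp
  show "is_sentence ?\<phi>" unfolding is_sentence_def fst_conv snd_conv length_alt
    using vv by (simp add: subset_eq)
  show "holds_in_L n ?\<phi>" unfolding sem by simp
  show "\<forall>m. m \<ge> 1 \<longrightarrow> m \<noteq> n \<longrightarrow> \<not> holds_in_L m ?\<phi>" unfolding sem by auto
  show "length (fst ?\<phi>) \<le> qstar n + 2" using len by (simp only: fst_conv length_alt)
  have ev2: "even (Suc (Suc v))" using ev by simp
  have "alternating_ends_forall (alt QEx (Suc (Suc v)))" by (rule alt_alternating) (simp, use ev2 in simp)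
  then show "alternating_ends_forall (fst ?\<phi>)" by (simp only: fst_conv)
qed

theorem mainTheorem5:
  fixes l :: nat
  assumes "l \<ge> 1"
  shows "\<exists>\<phi> :: prenex. is_sentence \<phi>
           \<and> holds_in_L l \<phi>
           \<and> (\<forall>m. m \<ge> 1 \<longrightarrow> m \<noteq> l \<longrightarrow> \<not> holds_in_L m \<phi>)
           \<and> length (fst \<phi>) \<le> qstar l + 2
           \<and> alternating_ends_forall (fst \<phi>)"
proof -
  from cases_n[OF assms] consider "l = 1" | i where "Vs i < l" "l \<le> 2 * Vs i"
    | i where "2 * Vs i < l" "l \<le> Vs (Suc i)" by blast
  then show ?thesis
  proof cases
    case 1
    show ?thesis by (rule final_A[of l 0]) (use 1 in \<open>auto simp: OKE.simps OKA.simps\<close>)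
  next
    case (2 i)
    have V: "1 \<le> Vs i" by (rule Vs_pos)
    have e: "OKE (2*i+1) l" using OK_bounds[of i] 2 by blast
    have e2: "OKE (2*i+2) l" using e OK_mono[of "2*i+1" l] by simp
    have lv: "l \<le> Vs (Suc i)" using 2 V by auto
    have a2: "OKA (2*i+2) l" using OK_bounds[of "Suc i"] lv by simp
    have "2*i+1 \<le> qstar l" using qbounds[of i] 2 by (auto simp: qstar_def)
    then have len: "Suc (2*i+2) \<le> qstar l + 2" by simp
    have od: "odd (Suc (2*i+2))" by simp
    show ?thesis using final_A[OF assms e2 a2 od len] .
  next
    case (3 i)
    have V: "1 \<le> Vs i" by (rule Vs_pos)
    have okm: "OKE (2*i+2) m \<and> OKA (2*i+2) m" if "m \<le> 2 * Vs i" for m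
    proof
      have "OKE (2*i+1) m" using OK_bounds[of i] that by blast
      then show "OKE (2*i+2) m" using OK_mono[of "2*i+1" m] by simp
      have "m \<le> Vs (Suc i)" using that V by auto
      then show "OKA (2*i+2) m" using OK_bounds[of "Suc i"] by simp
    qed
    have b1: "(l+1) div 2 \<le> 2 * Vs i" "l div 2 \<le> 2 * Vs i" using 3 V by auto
    have "2*i+2 \<le> qstar l" using qbounds[of i] 3 by (auto simp: qstar_def)
    then have len: "Suc (Suc (2*i+2)) \<le> qstar l + 2" by simp
    have n2: "2 \<le> l" using 3 V by auto
    have ev: "even (2*i+2)" by simp
    show ?thesis using final_E[OF ev n2 _ _ _ _ len] okm[OF b1(1)] okm[OF b1(2)] by blast
  qed
qed


end
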